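(* Let $n,d$ be positive integers, $\mathbf{c}\in\mathbb{Z}^n_{+}$, and $\mathbb{P}\subseteq[0,d]^n$ a bounded polyhedron with $\mathbb{P}\cap\mathbb{Z}^n\neq\emptyset$. Let $\mathbf{z}^\star=(z_0,\dots,z_n)$ be a lexicographically maximum element of $\{(\mathbf{c}^\top\mathbf{x},x_1,\dots,x_n):\mathbf{x}\in\mathbb{P}\}$ and let $\mathbf{x}^\star=(x_0,\dots,x_n)$ be a lexicographically maximum element of $\{(\mathbf{c}^\top\mathbf{x},x_1,\dots,x_n):\mathbf{x}\in\mathbb{P}\cap\mathbb{Z}^n\}$. Then $$\Big(d\sum_{i=1}^n\min(0,c_i),0,\dots,0\Big)\le_L \mathbf{x}^\star\le_L \alpha(\mathbf{z}^\star).$$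
   Context: Lexicographic order on $\mathbb{R}^{n+1}$: $\mathbf{x}<_L\mathbf{y}$ if there is $k\in\{0,\dots,n\}$ with $x_k<y_k$ and $x_i=y_i$ for all $i<k$; $\mathbf{x}\le_L\mathbf{y}$ means $\mathbf{x}<_L\mathbf{y}$ or $\mathbf{x}=\mathbf{y}$. A lexicographically maximum element of a set $T$ is some $\mathbf{t}\in T$ with $\mathbf{s}\le_L\mathbf{t}$ for all $\mathbf{s}\in T$. For $\mathbf{y}=(y_0,\dots,y_n)\in\mathbb{R}\times[0,d]^n$, define the integral vector $\alpha(\mathbf{y})$ by $\alpha(\mathbf{y})_i=\lfloor y_i\rfloor$ if $i\le k$ and $\alpha(\mathbf{y})_i=d$ if $i>k$, where $k=\min\{j\in\{0,\dots,n\}: y_j\notin\mathbb{Z}\}$; if $\mathbf{y}$ is integral, $\alpha(\mathbf{y})=\mathbf{y}$. *)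

theory Defs
  imports Complex_Main
begin

text \<open>Vectors of R^n are represented as functions nat => real with components at
  indices 1..n (all other components are 0). Vectors of R^(n+1) are functions
  nat => real whose relevant components are at indices 0..n.\<close>

definition Rn :: "nat \<Rightarrow> (nat \<Rightarrow> real) set" where
  "Rn n = {x. \<forall>i. (i = 0 \<or> n < i) \<longrightarrow> x i = 0}"

definition integral_vec :: "nat \<Rightarrow> (nat \<Rightarrow> real) \<Rightarrow> bool" where
  "integral_vec n x \<longleftrightarrow> (\<forall>i\<in>{1..n}. x i \<in> \<int>)"

definition polyhedron :: "nat \<Rightarrow> (nat \<Rightarrow> real) set \<Rightarrow> bool" where
  "polyhedron n P \<longleftrightarrow> (\<exists>m (A :: nat \<Rightarrow> nat \<Rightarrow> real) (b :: nat \<Rightarrow> real).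
      P = {x \<in> Rn n. \<forall>j<m. (\<Sum>i=1..n. A j i * x i) \<le> b j})"

definition lex_less :: "nat \<Rightarrow> (nat \<Rightarrow> real) \<Rightarrow> (nat \<Rightarrow> real) \<Rightarrow> bool" where
  "lex_less n x y \<longleftrightarrow> (\<exists>k\<le>n. x k < y k \<and> (\<forall>i<k. x i = y i))"

definition lex_le :: "nat \<Rightarrow> (nat \<Rightarrow> real) \<Rightarrow> (nat \<Rightarrow> real) \<Rightarrow> bool" where
  "lex_le n x y \<longleftrightarrow> lex_less n x y \<or> (\<forall>i\<le>n. x i = y i)"

definition lex_max :: "nat \<Rightarrow> (nat \<Rightarrow> real) set \<Rightarrow> (nat \<Rightarrow> real) \<Rightarrow> bool" where
  "lex_max n T t \<longleftrightarrow> t \<in> T \<and> (\<forall>s\<in>T. lex_le n s t)"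

definition lift :: "nat \<Rightarrow> (nat \<Rightarrow> int) \<Rightarrow> (nat \<Rightarrow> real) \<Rightarrow> (nat \<Rightarrow> real)" where
  "lift n c x = x(0 := (\<Sum>i=1..n. of_int (c i) * x i))"

definition alpha :: "nat \<Rightarrow> nat \<Rightarrow> (nat \<Rightarrow> real) \<Rightarrow> (nat \<Rightarrow> real)" where
  "alpha n d y = (if \<forall>j\<le>n. y j \<in> \<int> then y
     else (let k = (LEAST j. j \<le> n \<and> y j \<notin> \<int>) in
       (\<lambda>i. if i \<le> k then of_int \<lfloor>y i\<rfloor> else real d)))"

end

theory Submission
  imports Defs
begin

lemma lex_le_of_le:
  assumes "\<forall>i<m. x i = y i" "\<forall>i. m \<le> i \<and> i \<le> n \<longrightarrow> x i \<le> y i"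
  shows "lex_le n x y"
proof (cases "\<forall>i\<le>n. x i = y i")
  case True then show ?thesis by (simp add: lex_le_def)
next
  case False
  define k where "k = (LEAST i. i \<le> n \<and> x i \<noteq> y i)"
  have ex: "\<exists>i. i \<le> n \<and> x i \<noteq> y i" using False by auto
  have k1: "k \<le> n \<and> x k \<noteq> y k" unfolding k_def by (rule LeastI_ex[OF ex])
  have k2: "\<forall>i<k. x i = y i"
  proof (intro allI impI)
    fix i assume "i < k"
    then have "\<not> (i \<le> n \<and> x i \<noteq> y i)" unfolding k_def by (rule not_less_Least)
    then show "x i = y i" using \<open>i < k\<close> k1 by auto
  qed
  have "m \<le> k" using assms(1) k1 by (meson not_le)
  then have "x k < y k" using assms(2) k1 by (simp add: order_le_neq_trans)
  then show ?thesis using k1 k2 unfolding lex_le_def lex_less_def by blast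
qed

theorem lemma1:
  fixes n d :: nat and c :: "nat \<Rightarrow> int" and P :: "(nat \<Rightarrow> real) set"
    and zs xs :: "nat \<Rightarrow> real"
  assumes "n > 0" and "d > 0"
    and "\<forall>i\<in>{1..n}. c i \<ge> 0"
    and "polyhedron n P"
    and "P \<subseteq> {x \<in> Rn n. \<forall>i\<in>{1..n}. 0 \<le> x i \<and> x i \<le> real d}"
    and "\<exists>x\<in>P. integral_vec n x"
    and "lex_max n (lift n c ` P) zs"
    and "lex_max n (lift n c ` {x \<in> P. integral_vec n x}) xs"
  shows "lex_le n (\<lambda>i. if i = 0 then real d * (\<Sum>i=1..n. real_of_int (min 0 (c i))) else 0) xs
       \<and> lex_le n xs (alpha n d zs)"
proof -
  obtain x where x: "x \<in> P" "integral_vec n x" "xs = lift n c x"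
    using assms(8) unfolding lex_max_def by auto
  obtain z where z: "z \<in> P" "zs = lift n c z"
    using assms(7) unfolding lex_max_def by auto
  have xz: "lex_le n xs zs" using assms(7) x unfolding lex_max_def by auto
  have xb: "\<forall>i\<in>{1..n}. 0 \<le> x i \<and> x i \<le> real d" using assms(5) x(1) by auto
  have xs0: "xs 0 = (\<Sum>i=1..n. of_int (c i) * x i)" using x(3) by (simp add: lift_def)
  have xsi: "\<And>i. i \<noteq> 0 \<Longrightarrow> xs i = x i" using x(3) by (simp add: lift_def)
  have xint: "\<forall>i\<le>n. xs i \<in> \<int>"
  proof (intro allI impI)
    fix i assume "i \<le> n"
    show "xs i \<in> \<int>"
    proof (cases "i = 0")
      case True
      have "(\<Sum>i=1..n. of_int (c i) * x i) \<in> \<int>"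
        using x(2) unfolding integral_vec_def by (intro Ints_sum Ints_mult) auto
      then show ?thesis using True xs0 by simp
    next
      case False then show ?thesis using x(2) xsi \<open>i \<le> n\<close> unfolding integral_vec_def by auto
    qed
  qed
  have part1: "lex_le n (\<lambda>i. if i = 0 then real d * (\<Sum>i=1..n. real_of_int (min 0 (c i))) else 0) xs"
  proof -
    have s: "(\<Sum>i=1..n. real_of_int (min 0 (c i))) = 0"
      using assms(3) by (intro sum.neutral) auto
    have "0 \<le> xs 0" unfolding xs0 using assms(3) xb by (intro sum_nonneg) auto
    moreover have "\<forall>i. i \<noteq> 0 \<and> i \<le> n \<longrightarrow> 0 \<le> xs i" using xb xsi by auto
    ultimately show ?thesis unfolding s by (intro lex_le_of_le[where m=0]) auto
  qed
  have part2: "lex_le n xs (alpha n d zs)"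
  proof (cases "\<forall>j\<le>n. zs j \<in> \<int>")
    case True then show ?thesis using xz by (simp add: alpha_def)
  next
    case False
    define k where "k = (LEAST j. j \<le> n \<and> zs j \<notin> \<int>)"
    have ex: "\<exists>j. j \<le> n \<and> zs j \<notin> \<int>" using False by auto
    have k1: "k \<le> n \<and> zs k \<notin> \<int>" unfolding k_def by (rule LeastI_ex[OF ex])
    have k2: "\<forall>i<k. zs i \<in> \<int>"
    proof (intro allI impI)
      fix i assume "i < k"
      then have "\<not> (i \<le> n \<and> zs i \<notin> \<int>)" unfolding k_def by (rule not_less_Least)
      then show "zs i \<in> \<int>" using \<open>i < k\<close> k1 by auto
    qed
    have al: "alpha n d zs = (\<lambda>i. if i \<le> k then of_int \<lfloor>zs i\<rfloor> else real d)"
      using False unfolding alpha_def k_def[symmetric] Let_def by (rule if_not_P)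
    have flo: "\<And>i. zs i \<in> \<int> \<Longrightarrow> of_int \<lfloor>zs i\<rfloor> = zs i"
      by (metis Ints_cases floor_of_int)
    have "lex_less n xs zs"
      using xz k1 xint unfolding lex_le_def by auto
    then obtain j where j: "j \<le> n" "xs j < zs j" "\<forall>i<j. xs i = zs i"
      unfolding lex_less_def by auto
    have "\<not> k < j" using j(3) k1 xint by (metis)
    then consider "j < k" | "j = k" by linarith
    then show ?thesis
    proof cases
      case 1
      have "xs j < alpha n d zs j" using 1 j k2 flo al by auto
      moreover have "\<forall>i<j. xs i = alpha n d zs i" using 1 j k2 flo al by auto
      ultimately show ?thesis using j(1) unfolding lex_le_def lex_less_def by blast
    next
      case 2
      obtain a where a: "xs k = of_int a" using xint k1 by (metis Ints_cases)
      have "a < zs k" using a j 2 by simp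
      then have "a \<le> \<lfloor>zs k\<rfloor>" by (meson floor_less_cancel floor_of_int less_le_not_le linorder_not_le le_floor_iff less_imp_le)
      then have le: "xs k \<le> alpha n d zs k" using a al by simp
      show ?thesis
      proof (cases "xs k < alpha n d zs k")
        case True
        moreover have "\<forall>i<k. xs i = alpha n d zs i" using j 2 k2 flo al by auto
        ultimately show ?thesis using k1 unfolding lex_le_def lex_less_def by blast
      next
        case False
        have "\<forall>i<Suc k. xs i = alpha n d zs i" using j 2 k2 flo al le False
          by (auto simp: less_Suc_eq)
        moreover have "\<forall>i. Suc k \<le> i \<and> i \<le> n \<longrightarrow> xs i \<le> alpha n d zs i"
          using al xb xsi by auto
        ultimately show ?thesis by (rule lex_le_of_le)
      qed
    qed
  qed
  show ?thesis using part1 part2 by blast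
qed

end
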